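(* (i) If an entanglement witness $W$ on $\mathbb{C}^m\otimes\mathbb{C}^n$ can be locally projected to an entanglement witness supported on $\mathbb{C}^2\otimes\mathbb{C}^n$, then it can be further locally projected to an entanglement witness supported on $\mathbb{C}^2\otimes\mathbb{C}^2$. (ii) If $\rho_{AB}$ is a $1$-undistillable NPT state on $\mathbb{C}^m\otimes\mathbb{C}^n$, then $\rho_{AB}^\Gamma$ (which is an entanglement witness) cannot be locally projected to an entanglement witness supported on $\mathbb{C}^2\otimes\mathbb{C}^n$. (iii) If an entanglement witness can be locally projected to a non-decomposable entanglement witness that detects some PPT entangled state, then the original entanglement witness is itself non-decomposable.
   Context: An entanglement witness (EW) is a Hermitian matrix $W$ with $\mathrm{tr}(W\sigma)\ge0$ for all separable states $\sigma$ and $\mathrm{tr}(W\sigma)<0$ for some entangled state; it detects $\rho$ if $\mathrm{tr}(W\rho)<0$. A Hermitian matrix $W$ on $\mathbb{C}^m\otimes\mathbb{C}^n$ is locally projected to $W'=(U\otimes V)W(U\otimes V)^\dagger$ supported on $\mathbb{C}^p\otimes\mathbb{C}^q$ for matrices $U\in\mathcal{M}_{p,m}(\mathbb{C})$, $V\in\mathcal{M}_{q,n}(\mathbb{C})$. $M^\Gamma$ is the partial transpose with respect to the first subsystem; PPT/NPT means $\rho^\Gamma$ is / is not positive semidefinite. A state $\rho$ on $\mathbb{C}^m\otimes\mathbb{C}^n$ is $1$-undistillable if $(U\otimes V)\rho(U\otimes V)^\dagger$ is PPT for every $U\in\mathcal{M}_{2,m}(\mathbb{C})$ and every $V\in\mathcal{M}_{n}(\mathbb{C})$.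 A Hermitian $W$ is decomposable if $W=X^\Gamma+Y$ with $X,Y$ positive semidefinite. *)

theory Defs
  imports Complex_Main "Jordan_Normal_Form.Matrix"
begin

text \<open>A vector space C^m (x) C^n is modelled by index set {0..<m*n}, with the
  basis vector e_a (x) e_b at index a*n+b (standard Kronecker ordering).\<close>

definition adj :: "complex mat \<Rightarrow> complex mat" where
  "adj A = mat (dim_col A) (dim_row A) (\<lambda>(i,j). cnj (A $$ (j,i)))"

definition kron :: "complex mat \<Rightarrow> complex mat \<Rightarrow> complex mat" where
  "kron A B = mat (dim_row A * dim_row B) (dim_col A * dim_col B)
     (\<lambda>(i,j). A $$ (i div dim_row B, j div dim_col B) * B $$ (i mod dim_row B, j mod dim_col B))"

definition mtrace :: "complex mat \<Rightarrow> complex" where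
  "mtrace A = (\<Sum>i<dim_row A. A $$ (i,i))"

definition hermitian :: "complex mat \<Rightarrow> bool" where
  "hermitian A \<longleftrightarrow> A = adj A"

definition psd :: "nat \<Rightarrow> complex mat \<Rightarrow> bool" where
  "psd d M \<longleftrightarrow> M \<in> carrier_mat d d \<and>
     (\<forall>v \<in> carrier_vec d.
        let z = (\<Sum>i<d. \<Sum>j<d. cnj (v $ i) * M $$ (i,j) * v $ j) in Im z = 0 \<and> 0 \<le> Re z)"

definition state :: "nat \<Rightarrow> complex mat \<Rightarrow> bool" where
  "state d \<rho> \<longleftrightarrow> psd d \<rho> \<and> mtrace \<rho> = 1"

definition separable :: "nat \<Rightarrow> nat \<Rightarrow> complex mat \<Rightarrow> bool" where
  "separable m n \<sigma> \<longleftrightarrow> (\<exists>(K::nat) (p::nat \<Rightarrow> real) A B.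
      (\<forall>k<K. 0 \<le> p k \<and> state m (A k) \<and> state n (B k)) \<and> (\<Sum>k<K. p k) = 1 \<and>
      \<sigma> = mat (m*n) (m*n) (\<lambda>(i,j). \<Sum>k<K. complex_of_real (p k) * kron (A k) (B k) $$ (i,j)))"

definition entangled :: "nat \<Rightarrow> nat \<Rightarrow> complex mat \<Rightarrow> bool" where
  "entangled m n \<rho> \<longleftrightarrow> state (m*n) \<rho> \<and> \<not> separable m n \<rho>"

text \<open>W detects rho if tr(W rho) < 0 (the trace is real for Hermitian W, rho).\<close>
definition detects :: "complex mat \<Rightarrow> complex mat \<Rightarrow> bool" where
  "detects W \<rho> \<longleftrightarrow> Re (mtrace (W * \<rho>)) < 0"

definition EW :: "nat \<Rightarrow> nat \<Rightarrow> complex mat \<Rightarrow> bool" where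
  "EW m n W \<longleftrightarrow> W \<in> carrier_mat (m*n) (m*n) \<and> hermitian W \<and>
     (\<forall>\<sigma>. separable m n \<sigma> \<longrightarrow> 0 \<le> Re (mtrace (W * \<sigma>))) \<and>
     (\<exists>\<rho>. entangled m n \<rho> \<and> detects W \<rho>)"

definition lproj :: "complex mat \<Rightarrow> complex mat \<Rightarrow> complex mat \<Rightarrow> complex mat" where
  "lproj U V W = kron U V * W * adj (kron U V)"

text \<open>Partial transpose w.r.t. the first factor of C^m (x) C^n.\<close>
definition ptrans :: "nat \<Rightarrow> nat \<Rightarrow> complex mat \<Rightarrow> complex mat" where
  "ptrans m n M = mat (m*n) (m*n)
     (\<lambda>(i,j). M $$ ((j div n) * n + i mod n, (i div n) * n + j mod n))"

definition PPT :: "nat \<Rightarrow> nat \<Rightarrow> complex mat \<Rightarrow> bool" where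
  "PPT m n \<rho> \<longleftrightarrow> psd (m*n) (ptrans m n \<rho>)"

definition one_undistillable :: "nat \<Rightarrow> nat \<Rightarrow> complex mat \<Rightarrow> bool" where
  "one_undistillable m n \<rho> \<longleftrightarrow>
     (\<forall>U \<in> carrier_mat 2 m. \<forall>V \<in> carrier_mat n n. PPT 2 n (lproj U V \<rho>))"

definition decomposable :: "nat \<Rightarrow> nat \<Rightarrow> complex mat \<Rightarrow> bool" where
  "decomposable m n W \<longleftrightarrow> (\<exists>X Y. psd (m*n) X \<and> psd (m*n) Y \<and> W = ptrans m n X + Y)"

end

theory Submission
  imports Defs
begin


lemma mult_entry: "A \<in> carrier_mat a b \<Longrightarrow> B \<in> carrier_mat b c \<Longrightarrow> i<a \<Longrightarrow> j<c \<Longrightarrow>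
  (A*B)$$(i,j) = (\<Sum>k<b. A$$(i,k)*B$$(k,j))"
  by (auto simp: scalar_prod_def lessThan_atLeast0 intro!: sum.cong)

lemma sum_split: "(\<Sum>i<(m::nat)*n. f i) = (\<Sum>a<m. \<Sum>b<n. (f (a*n+b)::'a::comm_monoid_add))"
proof -
  have "(\<Sum>i<m*n. f i) = (\<Sum>a<m. sum f {a*n..<a*n+n})" by (rule sum.nat_group[symmetric])
  also have "\<dots> = (\<Sum>a<m. \<Sum>b<n. f (a*n+b))"
    by (rule sum.cong[OF refl]) (simp add: sum.atLeastLessThan_shift_0[of _ "x*n" for x] atLeast0LessThan comp_def)
  finally show ?thesis .
qed

lemma idx_less: "a < (m::nat) \<Longrightarrow> b < n \<Longrightarrow> a*n+b < m*n"
proof -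
  assume "a<m" "b<n"
  then have "a*n+b < a*n + n" by simp
  also have "\<dots> = (a+1)*n" by simp
  also have "\<dots> \<le> m*n" using \<open>a<m\<close> by (intro mult_right_mono) auto
  finally show ?thesis .
qed

definition qf :: "nat \<Rightarrow> complex mat \<Rightarrow> (nat \<Rightarrow> complex) \<Rightarrow> complex" where
  "qf d M f = (\<Sum>i<d. \<Sum>j<d. cnj (f i) * M$$(i,j) * f j)"

lemma qf_cong: "(\<And>i. i<d \<Longrightarrow> f i = g i) \<Longrightarrow> qf d M f = qf d M g"
  unfolding qf_def by (auto intro!: sum.cong)

lemma psd_iff: "psd d M \<longleftrightarrow> M \<in> carrier_mat d d \<and> (\<forall>f. Im (qf d M f) = 0 \<and> 0 \<le> Re (qf d M f))"
proof
  assume "psd d M"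
  then have M: "M \<in> carrier_mat d d" and H: "\<And>v. v \<in> carrier_vec d \<Longrightarrow>
     Im (\<Sum>i<d. \<Sum>j<d. cnj (v $ i) * M $$ (i,j) * v $ j) = 0 \<and> 0 \<le> Re (\<Sum>i<d. \<Sum>j<d. cnj (v $ i) * M $$ (i,j) * v $ j)"
    unfolding psd_def Let_def by auto
  show "M \<in> carrier_mat d d \<and> (\<forall>f. Im (qf d M f) = 0 \<and> 0 \<le> Re (qf d M f))"
  proof (intro conjI allI M)
    fix f
    have e: "qf d M f = (\<Sum>i<d. \<Sum>j<d. cnj (vec d f $ i) * M $$ (i,j) * vec d f $ j)"
      unfolding qf_def by (auto intro!: sum.cong)
    show "Im (qf d M f) = 0" "0 \<le> Re (qf d M f)" unfolding e using H[of "vec d f"] by auto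
  qed
next
  assume A: "M \<in> carrier_mat d d \<and> (\<forall>f. Im (qf d M f) = 0 \<and> 0 \<le> Re (qf d M f))"
  show "psd d M" unfolding psd_def Let_def
  proof (intro conjI ballI)
    show "M \<in> carrier_mat d d" using A by auto
    fix v :: "complex vec"
    have e: "(\<Sum>i<d. \<Sum>j<d. cnj (v $ i) * M $$ (i,j) * v $ j) = qf d M (\<lambda>i. v $ i)"
      unfolding qf_def by simp
    show "Im (\<Sum>i<d. \<Sum>j<d. cnj (v $ i) * M $$ (i,j) * v $ j) = 0"
      "0 \<le> Re (\<Sum>i<d. \<Sum>j<d. cnj (v $ i) * M $$ (i,j) * v $ j)" unfolding e using A by auto
  qed
qed

lemma qf_support:
  assumes S: "S \<subseteq> {..<d}" and f: "\<And>k. k \<notin> S \<Longrightarrow> f k = 0"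
  shows "qf d M f = (\<Sum>a\<in>S. \<Sum>b\<in>S. cnj (f a) * M$$(a,b) * f b)"
proof -
  have fin: "finite S" using S finite_subset by blast
  have inner: "(\<Sum>b<d. cnj (f a) * M$$(a,b) * f b) = (\<Sum>b\<in>S. cnj (f a) * M$$(a,b) * f b)" for a
    by (rule sum.mono_neutral_right) (use S f in auto)
  have "qf d M f = (\<Sum>a<d. \<Sum>b\<in>S. cnj (f a) * M$$(a,b) * f b)"
    unfolding qf_def using inner by simp
  also have "\<dots> = (\<Sum>a\<in>S. \<Sum>b\<in>S. cnj (f a) * M$$(a,b) * f b)"
    by (rule sum.mono_neutral_right) (use S f in auto)
  finally show ?thesis .
qed

lemma qf_support2:
  assumes "i<d" "j<d" "i\<noteq>j" "\<And>k. k\<noteq>i \<Longrightarrow> k\<noteq>j \<Longrightarrow> f k = 0"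
  shows "qf d M f = cnj (f i) * M$$(i,i) * f i + cnj (f i) * M$$(i,j) * f j
     + cnj (f j) * M$$(j,i) * f i + cnj (f j) * M$$(j,j) * f j"
  using assms by (subst qf_support[of "{i,j}"]) (auto simp: add.assoc)

lemma qf_support1:
  assumes "i<d" "\<And>k. k\<noteq>i \<Longrightarrow> f k = 0"
  shows "qf d M f = cnj (f i) * M$$(i,i) * f i"
  using assms by (subst qf_support[of "{i}"]) auto

lemma ii_mult: "- (\<i> * x * \<i>) = (x::complex)"
proof -
  have "\<i> * x * \<i> = \<i>*\<i>*x" by (simp add: ac_simps)
  then show ?thesis by simp
qed

lemma psd_herm:
  assumes P: "psd d M" and ij: "i<d" "j<d"
  shows "M$$(i,j) = cnj (M$$(j,i))"
proof -
  have Q: "\<And>f. Im (qf d M f) = 0" using P unfolding psd_iff by blast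
  have e3: "qf d M (\<lambda>k. if k=i then 1 else 0) = M$$(i,i)"
    by (subst qf_support1[of i]) (auto simp: ij)
  have e4: "qf d M (\<lambda>k. if k=j then 1 else 0) = M$$(j,j)"
    by (subst qf_support1[of j]) (auto simp: ij)
  have d3: "Im (M$$(i,i)) = 0" using Q[of "\<lambda>k. if k=i then 1 else 0"] unfolding e3 .
  have d4: "Im (M$$(j,j)) = 0" using Q[of "\<lambda>k. if k=j then 1 else 0"] unfolding e4 .
  show ?thesis
  proof (cases "i=j")
    case True
    then show ?thesis using d3 by (simp add: complex_eq_iff)
  next
    case False
    have e1: "qf d M (\<lambda>k. if k=i then 1 else if k=j then 1 else 0) = M$$(i,i) + M$$(i,j) + M$$(j,i) + M$$(j,j)"
      by (subst qf_support2[of i d j]) (use ij False in auto)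
    have e2: "qf d M (\<lambda>k. if k=i then 1 else if k=j then \<i> else 0) = M$$(i,i) + \<i>*M$$(i,j) - \<i>*M$$(j,i) + M$$(j,j)"
      by (subst qf_support2[of i d j]) (use ij False in \<open>auto simp: ii_mult\<close>)
    have d1: "Im (M$$(i,i) + M$$(i,j) + M$$(j,i) + M$$(j,j)) = 0"
      using Q[of "\<lambda>k. if k=i then 1 else if k=j then 1 else 0"] unfolding e1 .
    have d2: "Im (M$$(i,i) + \<i>*M$$(i,j) - \<i>*M$$(j,i) + M$$(j,j)) = 0"
      using Q[of "\<lambda>k. if k=i then 1 else if k=j then \<i> else 0"] unfolding e2 .
    have f1: "Im (M$$(i,j)) + Im (M$$(j,i)) = 0" using d1 d3 d4 by simp
    have f2: "Re (M$$(i,j)) - Re (M$$(j,i)) = 0" using d2 d3 d4 by simp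
    have g1: "Re (M$$(i,j)) = Re (cnj (M$$(j,i)))" using f2 by simp
    have g2: "Im (M$$(i,j)) = Im (cnj (M$$(j,i)))" using f1 by simp
    show ?thesis using g1 g2 by (rule complex_eqI)
  qed
qed

lemma qf_real:
  assumes H: "\<And>i j. i<d \<Longrightarrow> j<d \<Longrightarrow> M$$(i,j) = cnj (M$$(j,i))"
  shows "Im (qf d M f) = 0"
proof -
  have "cnj (qf d M f) = (\<Sum>i<d. \<Sum>j<d. f i * cnj (M$$(i,j)) * cnj (f j))"
    by (simp only: qf_def cnj_sum complex_cnj_mult complex_cnj_cnj)
  also have "\<dots> = (\<Sum>i<d. \<Sum>j<d. cnj (f j) * M$$(j,i) * f i)"
  proof (rule sum.cong[OF refl], rule sum.cong[OF refl])
    fix i j assume "i \<in> {..<d}" "j \<in> {..<d}"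
    then have "M$$(j,i) = cnj (M$$(i,j))" by (intro H) auto
    then show "f i * cnj (M$$(i,j)) * cnj (f j) = cnj (f j) * M$$(j,i) * f i" by simp
  qed
  also have "\<dots> = qf d M f" unfolding qf_def by (rule sum.swap)
  finally have "cnj (qf d M f) = qf d M f" .
  then show ?thesis by (metis Reals_cnj_iff complex_is_Real_iff)
qed

lemma adj_carrier: "W \<in> carrier_mat a b \<Longrightarrow> adj W \<in> carrier_mat b a"
  unfolding adj_def by auto

lemma adj_index: "W \<in> carrier_mat a b \<Longrightarrow> i < b \<Longrightarrow> j < a \<Longrightarrow> adj W $$ (i,j) = cnj (W$$(j,i))"
  unfolding adj_def by auto

lemma herm_iff: "W \<in> carrier_mat d d \<Longrightarrow> hermitian W \<longleftrightarrow> (\<forall>i<d. \<forall>j<d. W$$(i,j) = cnj (W$$(j,i)))"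
proof
  assume W: "W \<in> carrier_mat d d" and h: "hermitian W"
  show "\<forall>i<d. \<forall>j<d. W$$(i,j) = cnj (W$$(j,i))"
  proof (intro allI impI)
    fix i j assume ij: "i<d" "j<d"
    have "W$$(i,j) = adj W $$ (i,j)" using h unfolding hermitian_def by simp
    also have "\<dots> = cnj (W$$(j,i))" by (rule adj_index[OF W ij])
    finally show "W$$(i,j) = cnj (W$$(j,i))" .
  qed
next
  assume W: "W \<in> carrier_mat d d" and h: "\<forall>i<d. \<forall>j<d. W$$(i,j) = cnj (W$$(j,i))"
  have "W = adj W"
  proof (rule eq_matI)
    show "dim_row W = dim_row (adj W)" "dim_col W = dim_col (adj W)"
      using W adj_carrier[OF W] by auto
    fix i j assume "i < dim_row (adj W)" "j < dim_col (adj W)"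
    then have ij: "i<d" "j<d" using adj_carrier[OF W] by auto
    have "W$$(i,j) = cnj (W$$(j,i))" using h ij by blast
    then show "W$$(i,j) = adj W $$ (i,j)" using adj_index[OF W ij] by metis
  qed
  then show "hermitian W" unfolding hermitian_def .
qed




lemma cnj_mult_self: "cnj z * z = complex_of_real ((cmod z)^2)"
  by (metis complex_norm_square mult.commute of_real_power)

lemma qf_rank1_sum:
  assumes S: "finite S" and M: "\<And>i j. i<d \<Longrightarrow> j<d \<Longrightarrow> M$$(i,j) = (\<Sum>s\<in>S. g s i * cnj (g s j))"
  shows "qf d M f = (\<Sum>s\<in>S. cnj (\<Sum>j<d. cnj (g s j) * f j) * (\<Sum>j<d. cnj (g s j) * f j))"
proof -
  have "qf d M f = (\<Sum>i<d. \<Sum>j<d. \<Sum>s\<in>S. (cnj (f i) * g s i) * (cnj (g s j) * f j))"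
    unfolding qf_def
  proof (rule sum.cong[OF refl], rule sum.cong[OF refl])
    fix i j assume "i \<in> {..<d}" "j \<in> {..<d}"
    then have "M$$(i,j) = (\<Sum>s\<in>S. g s i * cnj (g s j))" using M by auto
    then show "cnj (f i) * M $$ (i, j) * f j = (\<Sum>s\<in>S. cnj (f i) * g s i * (cnj (g s j) * f j))"
      by (simp add: sum_distrib_left sum_distrib_right algebra_simps)
  qed
  also have "\<dots> = (\<Sum>i<d. \<Sum>s\<in>S. \<Sum>j<d. (cnj (f i) * g s i) * (cnj (g s j) * f j))"
    by (rule sum.cong[OF refl]) (rule sum.swap)
  also have "\<dots> = (\<Sum>s\<in>S. \<Sum>i<d. \<Sum>j<d. (cnj (f i) * g s i) * (cnj (g s j) * f j))"
    by (rule sum.swap)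
  also have "\<dots> = (\<Sum>s\<in>S. (\<Sum>i<d. cnj (f i) * g s i) * (\<Sum>j<d. cnj (g s j) * f j))"
    by (simp add: sum_product)
  also have "\<dots> = (\<Sum>s\<in>S. cnj (\<Sum>j<d. cnj (g s j) * f j) * (\<Sum>j<d. cnj (g s j) * f j))"
    by (simp add: mult.commute)
  finally show ?thesis .
qed

lemma psd_rank1_sum:
  assumes S: "finite S" and C: "M \<in> carrier_mat d d"
    and M: "\<And>i j. i<d \<Longrightarrow> j<d \<Longrightarrow> M$$(i,j) = (\<Sum>s\<in>S. g s i * cnj (g s j))"
  shows "psd d M"
  unfolding psd_iff
proof (intro conjI allI C)
  fix f
  have "qf d M f = (\<Sum>s\<in>S. cnj (\<Sum>j<d. cnj (g s j) * f j) * (\<Sum>j<d. cnj (g s j) * f j))"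
    by (rule qf_rank1_sum[OF S M])
  also have "\<dots> = complex_of_real (\<Sum>s\<in>S. (cmod (\<Sum>j<d. cnj (g s j) * f j))^2)"
    by (simp only: cnj_mult_self of_real_sum)
  finally have "qf d M f = complex_of_real (\<Sum>s\<in>S. (cmod (\<Sum>j<d. cnj (g s j) * f j))^2)" .
  then show "Im (qf d M f) = 0" "0 \<le> Re (qf d M f)" by (auto intro: sum_nonneg)
qed

lemma mtrace_mult: "W \<in> carrier_mat d d \<Longrightarrow> R \<in> carrier_mat d d \<Longrightarrow>
   mtrace (W*R) = (\<Sum>i<d. \<Sum>k<d. W$$(i,k) * R$$(k,i))"
proof -
  assume W: "W \<in> carrier_mat d d" and R: "R \<in> carrier_mat d d"
  have "mtrace (W*R) = (\<Sum>i<d. (W*R)$$(i,i))" unfolding mtrace_def using W by simp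
  also have "\<dots> = (\<Sum>i<d. \<Sum>k<d. W$$(i,k) * R$$(k,i))"
    by (rule sum.cong[OF refl], rule mult_entry[OF W R]) auto
  finally show ?thesis .
qed

lemma trace_rank1:
  assumes S: "finite S" and W: "W \<in> carrier_mat d d" and R: "R \<in> carrier_mat d d"
    and M: "\<And>i j. i<d \<Longrightarrow> j<d \<Longrightarrow> R$$(i,j) = (\<Sum>s\<in>S. g s i * cnj (g s j))"
  shows "mtrace (W*R) = (\<Sum>s\<in>S. qf d W (g s))"
proof -
  have "mtrace (W*R) = (\<Sum>i<d. \<Sum>k<d. \<Sum>s\<in>S. cnj (g s i) * W$$(i,k) * g s k)"
    unfolding mtrace_mult[OF W R]
  proof (rule sum.cong[OF refl], rule sum.cong[OF refl])
    fix i k assume "i \<in> {..<d}" "k \<in> {..<d}"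
    then have "R$$(k,i) = (\<Sum>s\<in>S. g s k * cnj (g s i))" using M by auto
    then show "W$$(i,k) * R$$(k,i) = (\<Sum>s\<in>S. cnj (g s i) * W$$(i,k) * g s k)"
      by (simp add: sum_distrib_left algebra_simps)
  qed
  also have "\<dots> = (\<Sum>i<d. \<Sum>s\<in>S. \<Sum>k<d. cnj (g s i) * W$$(i,k) * g s k)"
    by (rule sum.cong[OF refl]) (rule sum.swap)
  also have "\<dots> = (\<Sum>s\<in>S. \<Sum>i<d. \<Sum>k<d. cnj (g s i) * W$$(i,k) * g s k)"
    by (rule sum.swap)
  finally show ?thesis unfolding qf_def .
qed

lemma psd_zero_diag:
  assumes P: "psd d M" and ij: "i<d" "j<d" and z0: "M$$(i,i) = 0"
  shows "M$$(i,j) = 0"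
proof (rule ccontr)
  assume nz: "M$$(i,j) \<noteq> 0"
  then have ne: "i \<noteq> j" using z0 by auto
  define z where "z = M$$(i,j)"
  define t where "t = (Re (M$$(j,j)) + 1) / (2 * (cmod z)^2)"
  define x where "x = - complex_of_real t * z"
  have zpos: "(cmod z)^2 > 0" using nz unfolding z_def by simp
  have hji: "M$$(j,i) = cnj z" unfolding z_def using psd_herm[OF P ij(2) ij(1)] .
  have e: "qf d M (\<lambda>k. if k=i then x else if k=j then 1 else 0) = cnj x * z + cnj z * x + M$$(j,j)"
    by (subst qf_support2[of i d j]) (use ij ne z0 hji in \<open>auto simp: z_def\<close>)
  have "cnj x * z = - (complex_of_real t * (cnj z * z))" unfolding x_def by simp
  then have "cnj x * z = - complex_of_real (t * (cmod z)^2)" by (simp only: cnj_mult_self of_real_mult)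
  moreover have "cnj z * x = - (complex_of_real t * (cnj z * z))" unfolding x_def by (simp add: algebra_simps)
  then have "cnj z * x = - complex_of_real (t * (cmod z)^2)" by (simp only: cnj_mult_self of_real_mult)
  ultimately have "Re (qf d M (\<lambda>k. if k=i then x else if k=j then 1 else 0)) = Re (M$$(j,j)) - 2 * (t * (cmod z)^2)"
    unfolding e by simp
  also have "2 * (t * (cmod z)^2) = Re (M$$(j,j)) + 1" unfolding t_def using zpos by (simp add: field_simps)
  finally have "Re (qf d M (\<lambda>k. if k=i then x else if k=j then 1 else 0)) < 0" by simp
  then show False using P unfolding psd_iff by (meson not_le)
qed



lemma mult_if0r: "(x::complex) * (if P then y else 0) = (if P then x*y else 0)" by simp
lemma cnj_if0: "cnj (if P then y else 0) = (if P then cnj y else 0)" by simp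
lemma mult_if0l: "(if P then y else 0) * (x::complex) = (if P then y*x else 0)" by simp

lemma qf_add_delta:
  assumes i: "i<d"
  shows "qf d M (\<lambda>k. f k + (if k = i then \<beta> else 0)) = qf d M f + cnj \<beta> * (\<Sum>l<d. M$$(i,l) * f l)
     + (\<Sum>k<d. cnj (f k) * M$$(k,i)) * \<beta> + cnj \<beta> * M$$(i,i) * \<beta>"
proof -
  define h where "h = (\<lambda>k. if k = i then \<beta> else 0)"
  have pt: "\<And>k l. cnj (f k + h k) * M$$(k,l) * (f l + h l) = cnj (f k) * M$$(k,l) * f l
      + cnj (f k) * M$$(k,l) * h l + cnj (h k) * M$$(k,l) * f l + cnj (h k) * M$$(k,l) * h l"
    by (simp add: algebra_simps)
  have "qf d M (\<lambda>k. f k + h k) = qf d M f + (\<Sum>k<d. \<Sum>l<d. cnj (f k) * M$$(k,l) * h l)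
     + (\<Sum>k<d. \<Sum>l<d. cnj (h k) * M$$(k,l) * f l) + qf d M h"
    unfolding qf_def by (simp only: pt sum.distrib)
  also have "(\<Sum>k<d. \<Sum>l<d. cnj (f k) * M$$(k,l) * h l) = (\<Sum>k<d. cnj (f k) * M$$(k,i)) * \<beta>"
    unfolding h_def sum_distrib_right by (rule sum.cong[OF refl]) (simp add: mult_if0r i)
  also have "(\<Sum>k<d. \<Sum>l<d. cnj (h k) * M$$(k,l) * f l) = (\<Sum>k<d. cnj (h k) * (\<Sum>l<d. M$$(k,l) * f l))"
    by (simp add: sum_distrib_left mult.assoc)
  also have "\<dots> = cnj \<beta> * (\<Sum>l<d. M$$(i,l) * f l)"
    unfolding h_def by (simp add: cnj_if0 mult_if0l i)
  also have "qf d M h = cnj \<beta> * M$$(i,i) * \<beta>"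
    by (subst qf_support1[of i]) (auto simp: h_def i)
  finally show ?thesis unfolding h_def by (simp add: algebra_simps)
qed

lemma psd_decomp_step:
  assumes P: "psd d M" and i: "i<d" and nz: "M$$(i,i) \<noteq> 0"
  shows "\<exists>M' u. psd d M' \<and> M'$$(i,i) = 0 \<and> (\<forall>k<d. M$$(k,k) = 0 \<longrightarrow> M'$$(k,k) = 0)
     \<and> (\<forall>k<d. \<forall>l<d. M$$(k,l) = M'$$(k,l) + u k * cnj (u l))"
proof -
  define r where "r = Re (M$$(i,i))"
  define s where "s = sqrt r"
  define u where "u = (\<lambda>k. M$$(k,i) / complex_of_real s)"
  define M' where "M' = mat d d (\<lambda>(k,l). M$$(k,l) - u k * cnj (u l))"
  have C: "M \<in> carrier_mat d d" using P unfolding psd_iff by blast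
  have hii: "M$$(i,i) = cnj (M$$(i,i))" by (rule psd_herm[OF P i i])
  then have "Im (M$$(i,i)) = 0" by (metis Reals_cnj_iff complex_is_Real_iff)
  then have Mii: "M$$(i,i) = complex_of_real r" unfolding r_def by (simp add: complex_eq_iff)
  have "qf d M (\<lambda>k. if k=i then 1 else 0) = M$$(i,i)"
    by (subst qf_support1[of i]) (auto simp: i)
  then have "0 \<le> r" using P unfolding psd_iff r_def by metis
  moreover have "r \<noteq> 0" using nz Mii by auto
  ultimately have rpos: "r > 0" by simp
  have sr: "s * s = r" unfolding s_def using rpos by simp
  have ss: "complex_of_real s * complex_of_real s = complex_of_real r"
    unfolding sr[symmetric] by simp
  have uu: "u k * cnj (u l) = M$$(k,i) * M$$(i,l) / complex_of_real r" if "l<d" for k l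
  proof -
    have "M$$(i,l) = cnj (M$$(l,i))" by (rule psd_herm[OF P i that])
    then have "u k * cnj (u l) = M$$(k,i) * M$$(i,l) / (complex_of_real s * complex_of_real s)"
      unfolding u_def by simp
    then show ?thesis unfolding ss .
  qed
  have M'e: "M'$$(k,l) = M$$(k,l) - M$$(k,i) * M$$(i,l) / complex_of_real r" if "k<d" "l<d" for k l
    unfolding M'_def using that uu[OF that(2)] by simp
  have c1: "M'$$(i,i) = 0" using M'e[OF i i] Mii rpos by simp
  have c2: "\<forall>k<d. M$$(k,k) = 0 \<longrightarrow> M'$$(k,k) = 0"
  proof (intro allI impI)
    fix k assume k: "k<d" and z: "M$$(k,k) = 0"
    have "M$$(k,i) = 0" by (rule psd_zero_diag[OF P k i z])
    then show "M'$$(k,k) = 0" using M'e[OF k k] z by simp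
  qed
  have c3: "\<forall>k<d. \<forall>l<d. M$$(k,l) = M'$$(k,l) + u k * cnj (u l)"
    unfolding M'_def by auto
  have c4: "psd d M'"
    unfolding psd_iff
  proof (intro conjI allI)
    show "M' \<in> carrier_mat d d" unfolding M'_def by simp
    fix f
    define c where "c = (\<Sum>l<d. M$$(i,l) * f l)"
    define a where "a = (\<Sum>k<d. cnj (f k) * M$$(k,i))"
    define \<beta> where "\<beta> = - c / complex_of_real r"
    have ac: "a = cnj c"
      unfolding a_def c_def cnj_sum
    proof (rule sum.cong[OF refl])
      fix k assume "k \<in> {..<d}"
      then have "M$$(k,i) = cnj (M$$(i,k))" using psd_herm[OF P _ i] by auto
      then show "cnj (f k) * M$$(k,i) = cnj (M$$(i,k) * f k)" by simp
    qed
    have "qf d M' f = (\<Sum>k<d. \<Sum>l<d. cnj (f k) * M$$(k,l) * f l - (cnj (f k) * M$$(k,i)) * (M$$(i,l) * f l) / complex_of_real r)"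
      unfolding qf_def
      by (rule sum.cong[OF refl], rule sum.cong[OF refl]) (simp add: M'e algebra_simps)
    also have "\<dots> = qf d M f - a * c / complex_of_real r"
      unfolding qf_def a_def c_def sum_subtractf sum_divide_distrib[symmetric] sum_product ..
    finally have e1: "qf d M' f = qf d M f - a * c / complex_of_real r" .
    have e2: "qf d M (\<lambda>k. f k + (if k = i then \<beta> else 0)) = qf d M f + cnj \<beta> * c + a * \<beta> + cnj \<beta> * complex_of_real r * \<beta>"
      unfolding qf_add_delta[OF i] a_def c_def Mii ..
    have "cnj \<beta> = - a / complex_of_real r" unfolding \<beta>_def ac by simp
    then have "qf d M (\<lambda>k. f k + (if k = i then \<beta> else 0)) = qf d M' f"
      unfolding e1 e2 using rpos by (simp add: \<beta>_def field_simps)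
    then show "Im (qf d M' f) = 0" "0 \<le> Re (qf d M' f)" using P unfolding psd_iff by metis+
  qed
  show ?thesis using c1 c2 c3 c4 by blast
qed

lemma psd_decomp_base:
  assumes P: "psd d M" and z: "\<forall>k<d. M$$(k,k) = 0"
  shows "\<exists>N g. \<forall>i<d. \<forall>j<d. M$$(i,j) = (\<Sum>s<(N::nat). g s i * cnj (g s j))"
proof -
  have "M$$(i,j) = 0" if "i<d" "j<d" for i j using psd_zero_diag[OF P that] z that by blast
  then show ?thesis by (intro exI[of _ 0] exI[of _ "\<lambda>_ _. 0"]) simp
qed

lemma psd_decomp_aux:
  "\<forall>M. psd d M \<longrightarrow> card {k\<in>{..<d}. M$$(k,k) \<noteq> 0} \<le> c \<longrightarrow>
     (\<exists>N g. \<forall>i<d. \<forall>j<d. M$$(i,j) = (\<Sum>s<(N::nat). g s i * cnj (g s j)))"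
proof (induction c)
  case 0
  show ?case
  proof (intro allI impI)
    fix M assume P: "psd d M" and "card {k\<in>{..<d}. M$$(k,k) \<noteq> 0} \<le> 0"
    then have "{k\<in>{..<d}. M$$(k,k) \<noteq> 0} = {}" by simp
    then have "\<forall>k<d. M$$(k,k) = 0" by auto
    then show "\<exists>N g. \<forall>i<d. \<forall>j<d. M$$(i,j) = (\<Sum>s<(N::nat). g s i * cnj (g s j))"
      using psd_decomp_base[OF P] by blast
  qed
next
  case (Suc c)
  show ?case
  proof (intro allI impI)
    fix M assume P: "psd d M" and cd: "card {k\<in>{..<d}. M$$(k,k) \<noteq> 0} \<le> Suc c"
    show "\<exists>N g. \<forall>i<d. \<forall>j<d. M$$(i,j) = (\<Sum>s<(N::nat). g s i * cnj (g s j))"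
    proof (cases "{k\<in>{..<d}. M$$(k,k) \<noteq> 0} = {}")
      case True
      then have "\<forall>k<d. M$$(k,k) = 0" by auto
      then show ?thesis using psd_decomp_base[OF P] by blast
    next
      case False
      then obtain i where i: "i<d" "M$$(i,i) \<noteq> 0" by auto
      obtain M' u where P': "psd d M'" and z: "M'$$(i,i) = 0"
        and zz: "\<forall>k<d. M$$(k,k) = 0 \<longrightarrow> M'$$(k,k) = 0"
        and dec: "\<forall>k<d. \<forall>l<d. M$$(k,l) = M'$$(k,l) + u k * cnj (u l)"
        using psd_decomp_step[OF P i] by blast
      have sub: "{k\<in>{..<d}. M'$$(k,k) \<noteq> 0} \<subseteq> {k\<in>{..<d}. M$$(k,k) \<noteq> 0} - {i}"
        using z zz by auto
      have "card {k\<in>{..<d}. M'$$(k,k) \<noteq> 0} \<le> card ({k\<in>{..<d}. M$$(k,k) \<noteq> 0} - {i})"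
        by (rule card_mono[OF _ sub]) simp
      also have "\<dots> = card {k\<in>{..<d}. M$$(k,k) \<noteq> 0} - 1"
        using i by (subst card_Diff_singleton) auto
      finally have "card {k\<in>{..<d}. M'$$(k,k) \<noteq> 0} \<le> c" using cd by simp
      then obtain N g where g: "\<forall>i<d. \<forall>j<d. M'$$(i,j) = (\<Sum>s<(N::nat). g s i * cnj (g s j))"
        using Suc.IH P' by blast
      define g' where "g' = g(N := u)"
      show ?thesis
      proof (intro exI[of _ "Suc N"] exI[of _ g'] allI impI)
        fix k l assume kl: "k<d" "l<d"
        have "(\<Sum>s<N. g' s k * cnj (g' s l)) = (\<Sum>s<N. g s k * cnj (g s l))"
          by (rule sum.cong) (auto simp: g'_def)
        then show "M$$(k,l) = (\<Sum>s<Suc N. g' s k * cnj (g' s l))"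
          using dec g kl by (simp add: g'_def)
      qed
    qed
  qed
qed

lemma psd_decomp:
  assumes "psd d M"
  shows "\<exists>N g. \<forall>i<d. \<forall>j<d. M$$(i,j) = (\<Sum>s<(N::nat). g s i * cnj (g s j))"
  using psd_decomp_aux[of d "card {k\<in>{..<d}. M$$(k,k) \<noteq> 0}"] assms by blast

lemma trace_psd:
  assumes W: "psd d W" and R: "psd d R"
  shows "0 \<le> Re (mtrace (W*R))"
proof -
  obtain N g where g: "\<forall>i<d. \<forall>j<d. R$$(i,j) = (\<Sum>s<(N::nat). g s i * cnj (g s j))"
    using psd_decomp[OF R] by blast
  have "mtrace (W*R) = (\<Sum>s<N. qf d W (g s))"
    by (rule trace_rank1) (use W R g psd_iff in auto)
  then show ?thesis using W unfolding psd_iff by (auto intro: sum_nonneg)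
qed



lemma conj_entry:
  assumes K: "K \<in> carrier_mat e d" and H: "H \<in> carrier_mat d d" and ij: "i<e" "j<e"
  shows "(K*H*adj K)$$(i,j) = (\<Sum>k<d. \<Sum>l<d. K$$(i,k) * H$$(k,l) * cnj (K$$(j,l)))"
proof -
  have KH: "K*H \<in> carrier_mat e d" using K H by simp
  have aK: "adj K \<in> carrier_mat d e" by (rule adj_carrier[OF K])
  have "(K*H*adj K)$$(i,j) = (\<Sum>l<d. (K*H)$$(i,l) * adj K $$ (l,j))"
    by (rule mult_entry[OF KH aK ij])
  also have "\<dots> = (\<Sum>l<d. (\<Sum>k<d. K$$(i,k) * H$$(k,l)) * cnj (K$$(j,l)))"
  proof (rule sum.cong[OF refl])
    fix l assume l: "l \<in> {..<d}"
    show "(K*H)$$(i,l) * adj K $$ (l,j) = (\<Sum>k<d. K$$(i,k) * H$$(k,l)) * cnj (K$$(j,l))"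
      using mult_entry[OF K H ij(1)] adj_index[OF K _ ij(2)] l by simp
  qed
  also have "\<dots> = (\<Sum>l<d. \<Sum>k<d. K$$(i,k) * H$$(k,l) * cnj (K$$(j,l)))"
    by (simp add: sum_distrib_right)
  also have "\<dots> = (\<Sum>k<d. \<Sum>l<d. K$$(i,k) * H$$(k,l) * cnj (K$$(j,l)))"
    by (rule sum.swap)
  finally show ?thesis .
qed

lemma conj_carrier: "K \<in> carrier_mat e d \<Longrightarrow> H \<in> carrier_mat d d \<Longrightarrow> K*H*adj K \<in> carrier_mat e e"
  using adj_carrier[of K e d] by auto

lemma qf_congr:
  assumes K: "K \<in> carrier_mat e d" and H: "H \<in> carrier_mat d d"
  shows "qf e (K*H*adj K) v = qf d H (\<lambda>l. \<Sum>j<e. cnj (K$$(j,l)) * v j)"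
proof -
  define w where "w = (\<lambda>l. \<Sum>j<e. cnj (K$$(j,l)) * v j)"
  have s1: "(\<Sum>j<e. (K*H*adj K)$$(i,j) * v j) = (\<Sum>k<d. K$$(i,k) * (\<Sum>l<d. H$$(k,l) * w l))"
    if i: "i<e" for i
  proof -
    have "(\<Sum>j<e. (K*H*adj K)$$(i,j) * v j) = (\<Sum>j<e. \<Sum>k<d. \<Sum>l<d. K$$(i,k) * H$$(k,l) * (cnj (K$$(j,l)) * v j))"
      by (rule sum.cong[OF refl]) (simp add: conj_entry[OF K H i] sum_distrib_right mult.assoc)
    also have "\<dots> = (\<Sum>k<d. \<Sum>j<e. \<Sum>l<d. K$$(i,k) * H$$(k,l) * (cnj (K$$(j,l)) * v j))"
      by (rule sum.swap)
    also have "\<dots> = (\<Sum>k<d. \<Sum>l<d. \<Sum>j<e. K$$(i,k) * H$$(k,l) * (cnj (K$$(j,l)) * v j))"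
      by (rule sum.cong[OF refl]) (rule sum.swap)
    also have "\<dots> = (\<Sum>k<d. K$$(i,k) * (\<Sum>l<d. H$$(k,l) * w l))"
      unfolding w_def by (simp add: sum_distrib_left mult.assoc)
    finally show ?thesis .
  qed
  have "qf e (K*H*adj K) v = (\<Sum>i<e. cnj (v i) * (\<Sum>j<e. (K*H*adj K)$$(i,j) * v j))"
    unfolding qf_def by (simp add: sum_distrib_left mult.assoc)
  also have "\<dots> = (\<Sum>i<e. \<Sum>k<d. cnj (v i) * K$$(i,k) * (\<Sum>l<d. H$$(k,l) * w l))"
    by (rule sum.cong[OF refl]) (simp add: s1 sum_distrib_left mult.assoc)
  also have "\<dots> = (\<Sum>k<d. \<Sum>i<e. cnj (v i) * K$$(i,k) * (\<Sum>l<d. H$$(k,l) * w l))"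
    by (rule sum.swap)
  also have "\<dots> = (\<Sum>k<d. cnj (w k) * (\<Sum>l<d. H$$(k,l) * w l))"
    unfolding w_def by (simp add: sum_distrib_right mult.commute)
  also have "\<dots> = qf d H w"
    unfolding qf_def by (simp add: sum_distrib_left mult.assoc)
  finally show ?thesis unfolding w_def .
qed

lemma psd_congr:
  assumes K: "K \<in> carrier_mat e d" and P: "psd d H"
  shows "psd e (K*H*adj K)"
proof -
  have H: "H \<in> carrier_mat d d" using P unfolding psd_iff by blast
  show ?thesis unfolding psd_iff qf_congr[OF K H]
    using P conj_carrier[OF K H] unfolding psd_iff by blast
qed

lemma herm_congr:
  assumes K: "K \<in> carrier_mat e d" and H: "H \<in> carrier_mat d d" and h: "hermitian H"
  shows "hermitian (K*H*adj K)"
proof -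
  have hh: "\<forall>i<d. \<forall>j<d. H$$(i,j) = cnj (H$$(j,i))" using herm_iff[OF H] h by blast
  show ?thesis unfolding herm_iff[OF conj_carrier[OF K H]]
  proof (intro allI impI)
    fix i j assume ij: "i<e" "j<e"
    have "cnj ((K*H*adj K)$$(j,i)) = (\<Sum>k<d. \<Sum>l<d. cnj (K$$(j,k)) * cnj (H$$(k,l)) * K$$(i,l))"
      unfolding conj_entry[OF K H ij(2) ij(1)] by simp
    also have "\<dots> = (\<Sum>k<d. \<Sum>l<d. cnj (K$$(j,k)) * H$$(l,k) * K$$(i,l))"
    proof (rule sum.cong[OF refl], rule sum.cong[OF refl])
      fix k l assume "k \<in> {..<d}" "l \<in> {..<d}"
      then have "H$$(l,k) = cnj (H$$(k,l))" using hh by blast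
      then show "cnj (K$$(j,k)) * cnj (H$$(k,l)) * K$$(i,l) = cnj (K$$(j,k)) * H$$(l,k) * K$$(i,l)" by simp
    qed
    also have "\<dots> = (\<Sum>l<d. \<Sum>k<d. cnj (K$$(j,k)) * H$$(l,k) * K$$(i,l))"
      by (rule sum.swap)
    also have "\<dots> = (K*H*adj K)$$(i,j)"
      unfolding conj_entry[OF K H ij] by (simp add: ac_simps)
    finally show "(K*H*adj K)$$(i,j) = cnj ((K*H*adj K)$$(j,i))" by simp
  qed
qed




lemma kron_carrier: "U \<in> carrier_mat p m \<Longrightarrow> V \<in> carrier_mat q n \<Longrightarrow> kron U V \<in> carrier_mat (p*q) (m*n)"
  unfolding kron_def by auto

lemma kron_entry2:
  assumes U: "U \<in> carrier_mat p m" and V: "V \<in> carrier_mat q n" and i: "i < p*q" and k: "k1<m" "k2<n"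
  shows "kron U V $$ (i, k1*n+k2) = U$$(i div q, k1) * V$$(i mod q, k2)"
proof -
  have "k1*n+k2 < m*n" using idx_less[OF k] .
  then show ?thesis unfolding kron_def using U V i k by auto
qed

lemma lproj_carrier: "U \<in> carrier_mat p m \<Longrightarrow> V \<in> carrier_mat q n \<Longrightarrow> X \<in> carrier_mat (m*n) (m*n)
   \<Longrightarrow> lproj U V X \<in> carrier_mat (p*q) (p*q)"
  unfolding lproj_def by (rule conj_carrier[OF kron_carrier])

lemma lproj_entry:
  assumes U: "U \<in> carrier_mat p m" and V: "V \<in> carrier_mat q n" and X: "X \<in> carrier_mat (m*n) (m*n)"
    and ij: "i < p*q" "j < p*q"
  shows "lproj U V X $$ (i,j) = (\<Sum>k1<m. \<Sum>k2<n. \<Sum>l1<m. \<Sum>l2<n.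
     U$$(i div q,k1) * V$$(i mod q,k2) * X$$(k1*n+k2, l1*n+l2) * cnj (U$$(j div q,l1)) * cnj (V$$(j mod q,l2)))"
proof -
  have K: "kron U V \<in> carrier_mat (p*q) (m*n)" by (rule kron_carrier[OF U V])
  have "lproj U V X $$ (i,j) = (\<Sum>k<m*n. \<Sum>l<m*n. kron U V $$(i,k) * X$$(k,l) * cnj (kron U V $$(j,l)))"
    unfolding lproj_def by (rule conj_entry[OF K X ij])
  also have "\<dots> = (\<Sum>k1<m. \<Sum>k2<n. \<Sum>l1<m. \<Sum>l2<n. kron U V $$(i,k1*n+k2) * X$$(k1*n+k2,l1*n+l2) * cnj (kron U V $$(j,l1*n+l2)))"
    by (simp only: sum_split)
  also have "\<dots> = (\<Sum>k1<m. \<Sum>k2<n. \<Sum>l1<m. \<Sum>l2<n.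
     U$$(i div q,k1) * V$$(i mod q,k2) * X$$(k1*n+k2, l1*n+l2) * cnj (U$$(j div q,l1)) * cnj (V$$(j mod q,l2)))"
    by (rule sum.cong[OF refl])+ (simp add: kron_entry2[OF U V ij(1)] kron_entry2[OF U V ij(2)])
  finally show ?thesis .
qed

lemma ptrans_dims: "dim_row (ptrans m n M) = m*n" "dim_col (ptrans m n M) = m*n"
  unfolding ptrans_def by simp_all

lemma lproj_dims: "dim_row (lproj U V X) = dim_row U * dim_row V" "dim_col (lproj U V X) = dim_row U * dim_row V"
  unfolding lproj_def kron_def adj_def by simp_all

lemma ptrans_carrier: "ptrans m n M \<in> carrier_mat (m*n) (m*n)"
  unfolding ptrans_def by simp

lemma ptrans_entry2:
  assumes "i1<m" "i2<n" "j1<m" "j2<n"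
  shows "ptrans m n M $$ (i1*n+i2, j1*n+j2) = M$$(j1*n+i2, i1*n+j2)"
proof -
  have "i1*n+i2 < m*n" "j1*n+j2 < m*n" using idx_less assms by auto
  then show ?thesis unfolding ptrans_def using assms by simp
qed

lemma sum4_swap:
  "(\<Sum>a<(m::nat). \<Sum>b<(n::nat). \<Sum>c<m. \<Sum>d<n. F a b c d) = (\<Sum>a<m. \<Sum>b<n. \<Sum>c<m. \<Sum>d<n. (F c b a d :: 'a::comm_monoid_add))"
proof -
  have 1: "(\<Sum>a<m. \<Sum>b<n. \<Sum>c<m. \<Sum>d<n. F a b c d) = (\<Sum>a<m. \<Sum>c<m. \<Sum>b<n. \<Sum>d<n. F a b c d)"
    by (rule sum.cong[OF refl]) (rule sum.swap)
  have 2: "(\<Sum>a<m. \<Sum>b<n. \<Sum>c<m. \<Sum>d<n. F c b a d) = (\<Sum>a<m. \<Sum>c<m. \<Sum>b<n. \<Sum>d<n. F c b a d)"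
    by (rule sum.cong[OF refl]) (rule sum.swap)
  have 3: "(\<Sum>a<m. \<Sum>c<m. \<Sum>b<n. \<Sum>d<n. F a b c d) = (\<Sum>c<m. \<Sum>a<m. \<Sum>b<n. \<Sum>d<n. F a b c d)"
    by (rule sum.swap)
  show ?thesis by (simp only: 1 2 3)
qed

lemma lproj_ptrans:
  assumes U: "U \<in> carrier_mat p m" and V: "V \<in> carrier_mat q n" and X: "X \<in> carrier_mat (m*n) (m*n)"
  shows "lproj U V (ptrans m n X) = ptrans p q (lproj (map_mat cnj U) V X)"
proof (rule eq_matI)
  have U': "map_mat cnj U \<in> carrier_mat p m" using U by simp
  show "dim_row (lproj U V (ptrans m n X)) = dim_row (ptrans p q (lproj (map_mat cnj U) V X))"
    using U V by (simp add: lproj_dims ptrans_dims)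
  show "dim_col (lproj U V (ptrans m n X)) = dim_col (ptrans p q (lproj (map_mat cnj U) V X))"
    using U V by (simp add: lproj_dims ptrans_dims)
  fix i j assume "i < dim_row (ptrans p q (lproj (map_mat cnj U) V X))" "j < dim_col (ptrans p q (lproj (map_mat cnj U) V X))"
  then have ij: "i < p*q" "j < p*q" by (simp_all add: ptrans_dims)
  then have q: "q > 0" by (cases q) auto
  define a where "a = i div q"
  define b where "b = i mod q"
  define c where "c = j div q"
  define d where "d = j mod q"
  have a: "a < p" unfolding a_def using ij q by (simp add: less_mult_imp_div_less)
  have c: "c < p" unfolding c_def using ij q by (simp add: less_mult_imp_div_less)
  have b: "b < q" "d < q" unfolding b_def d_def using q by auto
  have I1: "c*q+b < p*q" "a*q+d < p*q" using idx_less a b c by auto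
  have L: "lproj U V (ptrans m n X) $$ (i,j) = (\<Sum>k1<m. \<Sum>k2<n. \<Sum>l1<m. \<Sum>l2<n.
     U$$(a,k1) * V$$(b,k2) * X$$(l1*n+k2, k1*n+l2) * cnj (U$$(c,l1)) * cnj (V$$(d,l2)))"
    unfolding lproj_entry[OF U V ptrans_carrier ij] a_def b_def c_def d_def
    by (rule sum.cong[OF refl])+ (simp add: ptrans_entry2)
  have "ptrans p q (lproj (map_mat cnj U) V X) $$ (i,j) = lproj (map_mat cnj U) V X $$ (c*q+b, a*q+d)"
    unfolding ptrans_def a_def b_def c_def d_def using ij by simp
  also have "\<dots> = (\<Sum>k1<m. \<Sum>k2<n. \<Sum>l1<m. \<Sum>l2<n.
     cnj (U$$(c,k1)) * V$$(b,k2) * X$$(k1*n+k2, l1*n+l2) * U$$(a,l1) * cnj (V$$(d,l2)))"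
    unfolding lproj_entry[OF U' V X I1] using a b c q
    by (intro sum.cong refl) (auto simp: carrier_matD[OF U])
  also have "\<dots> = (\<Sum>k1<m. \<Sum>k2<n. \<Sum>l1<m. \<Sum>l2<n.
     cnj (U$$(c,l1)) * V$$(b,k2) * X$$(l1*n+k2, k1*n+l2) * U$$(a,k1) * cnj (V$$(d,l2)))"
    by (rule sum4_swap)
  also have "\<dots> = lproj U V (ptrans m n X) $$ (i,j)"
    unfolding L by (simp add: ac_simps)
  finally show "lproj U V (ptrans m n X) $$ (i,j) = ptrans p q (lproj (map_mat cnj U) V X) $$ (i,j)" by simp
qed

lemma lproj_add:
  assumes U: "U \<in> carrier_mat p m" and V: "V \<in> carrier_mat q n"
    and A: "A \<in> carrier_mat (m*n) (m*n)" and B: "B \<in> carrier_mat (m*n) (m*n)"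
  shows "lproj U V (A + B) = lproj U V A + lproj U V B"
proof -
  have K: "kron U V \<in> carrier_mat (p*q) (m*n)" by (rule kron_carrier[OF U V])
  have aK: "adj (kron U V) \<in> carrier_mat (m*n) (p*q)" by (rule adj_carrier[OF K])
  have "kron U V * (A + B) = kron U V * A + kron U V * B" by (rule mult_add_distrib_mat[OF K A B])
  moreover have "(kron U V * A + kron U V * B) * adj (kron U V) = kron U V * A * adj (kron U V) + kron U V * B * adj (kron U V)"
    by (rule add_mult_distrib_mat) (use K A B aK in auto)
  ultimately show ?thesis unfolding lproj_def by simp
qed




definition pv :: "nat \<Rightarrow> (nat \<Rightarrow> complex) \<Rightarrow> (nat \<Rightarrow> complex) \<Rightarrow> nat \<Rightarrow> complex" where
  "pv n a b = (\<lambda>I. a (I div n) * b (I mod n))"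

lemma qf_scale: "qf d M (\<lambda>i. complex_of_real t * f i) = complex_of_real (t^2) * qf d M f"
  unfolding qf_def by (simp add: sum_distrib_left algebra_simps power2_eq_square)

lemma qf_zero: "(\<And>i. i<d \<Longrightarrow> f i = 0) \<Longrightarrow> qf d M f = 0"
  unfolding qf_def by simp

lemma norm_zero: "(\<Sum>i<(d::nat). (cmod (f i))^2) = 0 \<Longrightarrow> i<d \<Longrightarrow> f i = 0"
  by (subst (asm) sum_nonneg_eq_0_iff) auto

lemma norm_one:
  assumes pos: "(\<Sum>i<(d::nat). (cmod (f i))^2) > 0"
  shows "(\<Sum>i<d. (cmod (complex_of_real (1 / sqrt (\<Sum>i<d. (cmod (f i))^2)) * f i))^2) = 1"
proof -
  define \<alpha> where "\<alpha> = (\<Sum>i<d. (cmod (f i))^2)"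
  have "(\<Sum>i<d. (cmod (complex_of_real (1 / sqrt \<alpha>) * f i))^2) = (\<Sum>i<d. (cmod (f i))^2 / \<alpha>)"
    using pos unfolding \<alpha>_def[symmetric]
    by (intro sum.cong refl) (simp add: norm_divide power_divide)
  also have "\<dots> = 1" using pos by (simp add: sum_divide_distrib[symmetric] \<alpha>_def)
  finally show ?thesis unfolding \<alpha>_def .
qed

lemma rank1_state:
  assumes n1: "(\<Sum>i<d. (cmod (g i))^2) = 1"
  shows "state d (mat d d (\<lambda>(i,j). g i * cnj (g j)))"
    "W \<in> carrier_mat d d \<Longrightarrow> mtrace (W * mat d d (\<lambda>(i,j). g i * cnj (g j))) = qf d W g"
proof -
  have e: "\<And>i j. i<d \<Longrightarrow> j<d \<Longrightarrow> mat d d (\<lambda>(i,j). g i * cnj (g j)) $$ (i,j) = (\<Sum>s\<in>{0::nat}. (\<lambda>_. g) s i * cnj ((\<lambda>_. g) s j))"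
    by simp
  have "psd d (mat d d (\<lambda>(i,j). g i * cnj (g j)))"
    by (rule psd_rank1_sum[OF _ _ e]) auto
  moreover have "mtrace (mat d d (\<lambda>(i,j). g i * cnj (g j))) = 1"
  proof -
    have "mtrace (mat d d (\<lambda>(i,j). g i * cnj (g j))) = (\<Sum>i<d. g i * cnj (g i))"
      unfolding mtrace_def by simp
    also have "\<dots> = complex_of_real (\<Sum>i<d. (cmod (g i))^2)"
      by (simp add: complex_norm_square[symmetric])
    finally show ?thesis using n1 by simp
  qed
  ultimately show "state d (mat d d (\<lambda>(i,j). g i * cnj (g j)))" unfolding state_def by simp
  assume W: "W \<in> carrier_mat d d"
  have "mtrace (W * mat d d (\<lambda>(i,j). g i * cnj (g j))) = (\<Sum>s\<in>{0::nat}. qf d W ((\<lambda>_. g) s))"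
    by (rule trace_rank1[OF _ W _ e]) auto
  then show "mtrace (W * mat d d (\<lambda>(i,j). g i * cnj (g j))) = qf d W g" by simp
qed

lemma EW_intro:
  assumes C: "W \<in> carrier_mat (m*n) (m*n)" and h: "hermitian W"
    and BP: "\<forall>\<sigma>. separable m n \<sigma> \<longrightarrow> 0 \<le> Re (mtrace (W * \<sigma>))"
    and neg: "Re (qf (m*n) W f) < 0"
  shows "EW m n W"
proof -
  define d where "d = m*n"
  define \<alpha> where "\<alpha> = (\<Sum>i<d. (cmod (f i))^2)"
  have "\<alpha> \<noteq> 0"
  proof
    assume "\<alpha> = 0"
    then have "qf d W f = 0" by (intro qf_zero norm_zero[of f d]) (simp_all add: \<alpha>_def)
    then show False using neg unfolding d_def by simp
  qed
  moreover have "\<alpha> \<ge> 0" unfolding \<alpha>_def by (auto intro: sum_nonneg)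
  ultimately have apos: "\<alpha> > 0" by simp
  define t where "t = 1 / sqrt \<alpha>"
  define g where "g = (\<lambda>i. complex_of_real t * f i)"
  have n1: "(\<Sum>i<d. (cmod (g i))^2) = 1" unfolding g_def t_def \<alpha>_def
    by (rule norm_one) (use apos \<alpha>_def in simp)
  define \<rho> where "\<rho> = mat d d (\<lambda>(i,j). g i * cnj (g j))"
  have st: "state d \<rho>" unfolding \<rho>_def by (rule rank1_state(1)[OF n1])
  have tr: "mtrace (W * \<rho>) = qf d W g" unfolding \<rho>_def by (rule rank1_state(2)[OF n1]) (use C d_def in simp)
  have tpos: "t^2 > 0" unfolding t_def using apos by simp
  have "Re (mtrace (W * \<rho>)) = t^2 * Re (qf d W f)" unfolding tr g_def qf_scale by simp
  also have "\<dots> < 0" using neg tpos unfolding d_def by (simp add: mult_pos_neg)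
  finally have det: "Re (mtrace (W * \<rho>)) < 0" .
  have "\<not> separable m n \<rho>" using BP det by force
  then have "entangled m n \<rho>" using st unfolding entangled_def d_def by simp
  moreover have "detects W \<rho>" using det unfolding detects_def .
  ultimately show ?thesis unfolding EW_def using C h BP by blast
qed

lemma psd_of_qf:
  assumes C: "W \<in> carrier_mat d d" and h: "hermitian W" and nn: "\<forall>f. 0 \<le> Re (qf d W f)"
  shows "psd d W"
proof -
  have hh: "\<And>i j. i<d \<Longrightarrow> j<d \<Longrightarrow> W$$(i,j) = cnj (W$$(j,i))" using herm_iff[OF C] h by blast
  show ?thesis unfolding psd_iff using C nn qf_real[OF hh] by blast
qed

lemma psd_not_EW:
  assumes P: "psd (m*n) W" shows "\<not> EW m n W"
proof
  assume "EW m n W"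
  then obtain \<rho> where "entangled m n \<rho>" "detects W \<rho>" unfolding EW_def by blast
  then have "psd (m*n) \<rho>" "Re (mtrace (W*\<rho>)) < 0" unfolding entangled_def state_def detects_def by auto
  then show False using trace_psd[OF P] by force
qed

lemma EW_neg:
  assumes E: "EW m n W" shows "\<exists>f. Re (qf (m*n) W f) < 0"
proof (rule ccontr)
  assume "\<not> (\<exists>f. Re (qf (m*n) W f) < 0)"
  then have nn: "\<forall>f. 0 \<le> Re (qf (m*n) W f)" by (simp add: not_less)
  have "psd (m*n) W" by (rule psd_of_qf[OF _ _ nn]) (use E EW_def in auto)
  then show False using psd_not_EW E by blast
qed




lemma idx_div: "i < m*n \<Longrightarrow> i div n < (m::nat)"
  by (simp add: less_mult_imp_div_less)

lemma idx_mod: "i < m*n \<Longrightarrow> i mod n < (n::nat)"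
  by (cases n) auto

lemma kron_entry:
  assumes "A \<in> carrier_mat m m" "B \<in> carrier_mat n n" "i < m*n" "j < m*n"
  shows "kron A B $$ (i,j) = A$$(i div n, j div n) * B$$(i mod n, j mod n)"
  unfolding kron_def using assms by auto

lemma BP_prod:
  assumes C: "W \<in> carrier_mat (m*n) (m*n)"
    and BP: "\<forall>\<sigma>. separable m n \<sigma> \<longrightarrow> 0 \<le> Re (mtrace (W * \<sigma>))"
  shows "0 \<le> Re (qf (m*n) W (pv n a b))"
proof -
  define \<alpha> where "\<alpha> = (\<Sum>x<m. (cmod (a x))^2)"
  define \<beta> where "\<beta> = (\<Sum>y<n. (cmod (b y))^2)"
  have a0: "\<alpha> \<ge> 0" "\<beta> \<ge> 0" unfolding \<alpha>_def \<beta>_def by (auto intro: sum_nonneg)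
  show ?thesis
  proof (cases "\<alpha> = 0 \<or> \<beta> = 0")
    case True
    have "qf (m*n) W (pv n a b) = 0"
    proof (rule qf_zero)
      fix i assume i: "i < m*n"
      show "pv n a b i = 0"
      proof (cases "\<alpha> = 0")
        case True
        then have "a (i div n) = 0" using norm_zero[of a m] idx_div[OF i] unfolding \<alpha>_def by blast
        then show ?thesis unfolding pv_def by simp
      next
        case False
        then have "\<beta> = 0" using \<open>\<alpha> = 0 \<or> \<beta> = 0\<close> by simp
        then have "b (i mod n) = 0" using norm_zero[of b n] idx_mod[OF i] unfolding \<beta>_def by blast
        then show ?thesis unfolding pv_def by simp
      qed
    qed
    then show ?thesis by simp
  next
    case False
    then have ap: "\<alpha> > 0" "\<beta> > 0" using a0 by auto
    define ta where "ta = 1 / sqrt \<alpha>"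
    define tb where "tb = 1 / sqrt \<beta>"
    define a' where "a' = (\<lambda>x. complex_of_real ta * a x)"
    define b' where "b' = (\<lambda>x. complex_of_real tb * b x)"
    have na: "(\<Sum>x<m. (cmod (a' x))^2) = 1" unfolding a'_def ta_def \<alpha>_def
      by (rule norm_one) (use ap \<alpha>_def in simp)
    have nb: "(\<Sum>x<n. (cmod (b' x))^2) = 1" unfolding b'_def tb_def \<beta>_def
      by (rule norm_one) (use ap \<beta>_def in simp)
    define A where "A = mat m m (\<lambda>(i,j). a' i * cnj (a' j))"
    define B where "B = mat n n (\<lambda>(i,j). b' i * cnj (b' j))"
    have sA: "state m A" unfolding A_def by (rule rank1_state(1)[OF na])
    have sB: "state n B" unfolding B_def by (rule rank1_state(1)[OF nb])
    define \<sigma> where "\<sigma> = mat (m*n) (m*n) (\<lambda>(i,j). \<Sum>k<(1::nat). complex_of_real ((\<lambda>_. 1::real) k) * kron ((\<lambda>_. A) k) ((\<lambda>_. B) k) $$ (i,j))"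
    have sep: "separable m n \<sigma>" unfolding separable_def \<sigma>_def
      by (rule exI[of _ 1], rule exI[of _ "\<lambda>_. 1"], rule exI[of _ "\<lambda>_. A"], rule exI[of _ "\<lambda>_. B"])
        (use sA sB in simp)
    have Ac: "A \<in> carrier_mat m m" "B \<in> carrier_mat n n" unfolding A_def B_def by auto
    have e: "\<sigma> $$ (i,j) = (\<Sum>s\<in>{0::nat}. (\<lambda>_. pv n a' b') s i * cnj ((\<lambda>_. pv n a' b') s j))"
      if "i < m*n" "j < m*n" for i j
      unfolding \<sigma>_def using that kron_entry[OF Ac that] idx_div[OF that(1)] idx_div[OF that(2)]
        idx_mod[OF that(1)] idx_mod[OF that(2)]
      by (simp add: A_def B_def pv_def)
    have "mtrace (W * \<sigma>) = (\<Sum>s\<in>{0::nat}. qf (m*n) W ((\<lambda>_. pv n a' b') s))"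
      by (rule trace_rank1[OF _ C _ e]) (auto simp: \<sigma>_def)
    then have tr: "mtrace (W * \<sigma>) = qf (m*n) W (pv n a' b')" by simp
    have eq: "pv n a' b' = (\<lambda>i. complex_of_real (ta * tb) * pv n a b i)"
      unfolding pv_def a'_def b'_def by (auto simp: algebra_simps)
    have "mtrace (W * \<sigma>) = complex_of_real ((ta*tb)^2) * qf (m*n) W (pv n a b)"
      by (simp only: tr eq qf_scale)
    then have "Re (mtrace (W * \<sigma>)) = (ta*tb)^2 * Re (qf (m*n) W (pv n a b))" by simp
    moreover have "(ta*tb)^2 > 0" unfolding ta_def tb_def using ap by simp
    moreover have "0 \<le> Re (mtrace (W * \<sigma>))" using BP sep by blast
    ultimately show ?thesis by (simp add: zero_le_mult_iff)
  qed
qed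



lemma sum_Sigma3:
  assumes "finite A" "\<And>k. finite (B k)" "\<And>k. finite (C k)"
  shows "(\<Sum>x\<in>Sigma A (\<lambda>k. B k \<times> C k). F x) = (\<Sum>k\<in>A. \<Sum>s\<in>B k. \<Sum>t\<in>C k. F (k,s,t))"
proof -
  have "(\<Sum>x\<in>Sigma A (\<lambda>k. B k \<times> C k). F x) = (\<Sum>k\<in>A. \<Sum>y\<in>B k \<times> C k. F (k,y))"
    by (subst sum.Sigma) (use assms in auto)
  also have "\<dots> = (\<Sum>k\<in>A. \<Sum>s\<in>B k. \<Sum>t\<in>C k. F (k,s,t))"
    by (rule sum.cong[OF refl]) (simp add: sum.cartesian_product)
  finally show ?thesis .
qed


lemma decomp_family:
  assumes "\<forall>k<K. psd m (A k)"
  shows "\<exists>N g. \<forall>k<K. \<forall>i<m. \<forall>j<m. A k $$ (i,j) = (\<Sum>s<(N k::nat). g k s i * cnj (g k s j))"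
proof -
  have "\<forall>k. \<exists>N g. k<K \<longrightarrow> (\<forall>i<m. \<forall>j<m. A k $$ (i,j) = (\<Sum>s<(N::nat). g s i * cnj (g s j)))"
  proof
    fix k
    show "\<exists>N g. k<K \<longrightarrow> (\<forall>i<m. \<forall>j<m. A k $$ (i,j) = (\<Sum>s<(N::nat). g s i * cnj (g s j)))"
    proof (cases "k<K")
      case True
      then have "psd m (A k)" using assms by blast
      then show ?thesis using psd_decomp by blast
    qed auto
  qed
  then show ?thesis by metis
qed

lemma BP_sep:
  assumes C: "W \<in> carrier_mat (m*n) (m*n)"
    and P: "\<forall>a b. 0 \<le> Re (qf (m*n) W (pv n a b))"
    and S: "separable m n \<sigma>"
  shows "0 \<le> Re (mtrace (W * \<sigma>))"
proof -
  obtain K :: nat and p :: "nat \<Rightarrow> real" and A B where pk: "\<forall>k<K. 0 \<le> p k \<and> state m (A k) \<and> state n (B k)"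
    and "sum p {..<K} = 1" and sig: "\<sigma> = mat (m*n) (m*n) (\<lambda>(i,j). \<Sum>k<K. complex_of_real (p k) * kron (A k) (B k) $$ (i,j))"
    using S unfolding separable_def by blast
  have pA: "\<forall>k<K. psd m (A k)" and pB: "\<forall>k<K. psd n (B k)" using pk unfolding state_def by auto
  obtain NA gA where dA: "\<forall>k<K. \<forall>i<m. \<forall>j<m. A k $$ (i,j) = (\<Sum>s<(NA k::nat). gA k s i * cnj (gA k s j))"
    using decomp_family[OF pA] by blast
  obtain NB gB where dB: "\<forall>k<K. \<forall>i<n. \<forall>j<n. B k $$ (i,j) = (\<Sum>s<(NB k::nat). gB k s i * cnj (gB k s j))"
    using decomp_family[OF pB] by blast
  define S where "S = Sigma {..<K} (\<lambda>k. {..<NA k} \<times> {..<NB k})"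
  define G where "G = (\<lambda>(k,s,t). pv n (\<lambda>x. complex_of_real (sqrt (p k)) * gA k s x) (gB k t))"
  have fin: "finite S" unfolding S_def by auto
  have Cs: "\<sigma> \<in> carrier_mat (m*n) (m*n)" unfolding sig by simp
  have e: "\<sigma> $$ (i,j) = (\<Sum>x\<in>S. G x i * cnj (G x j))" if ij: "i<m*n" "j<m*n" for i j
  proof -
    have "\<sigma> $$ (i,j) = (\<Sum>k<K. complex_of_real (p k) * kron (A k) (B k) $$ (i,j))"
      unfolding sig using ij by simp
    also have "\<dots> = (\<Sum>k<K. \<Sum>s<NA k. \<Sum>t<NB k. G (k,s,t) i * cnj (G (k,s,t) j))"
    proof (rule sum.cong[OF refl])
      fix k assume k: "k \<in> {..<K}"
      have Ak: "A k \<in> carrier_mat m m" "B k \<in> carrier_mat n n" using pA pB k unfolding psd_iff by auto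
      have sp: "complex_of_real (sqrt (p k)) * complex_of_real (sqrt (p k)) = complex_of_real (p k)"
        using pk k by (simp flip: of_real_mult)
      have a: "A k $$ (i div n, j div n) = (\<Sum>s<NA k. gA k s (i div n) * cnj (gA k s (j div n)))"
        using dA k idx_div[OF ij(1)] idx_div[OF ij(2)] by blast
      have b: "B k $$ (i mod n, j mod n) = (\<Sum>t<NB k. gB k t (i mod n) * cnj (gB k t (j mod n)))"
        using dB k idx_mod[OF ij(1)] idx_mod[OF ij(2)] by blast
      have "complex_of_real (p k) * kron (A k) (B k) $$ (i,j)
          = complex_of_real (p k) * ((\<Sum>s<NA k. gA k s (i div n) * cnj (gA k s (j div n))) * (\<Sum>t<NB k. gB k t (i mod n) * cnj (gB k t (j mod n))))"
        unfolding kron_entry[OF Ak ij] a b ..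
      also have "\<dots> = (\<Sum>s<NA k. \<Sum>t<NB k. complex_of_real (p k) * ((gA k s (i div n) * cnj (gA k s (j div n))) * (gB k t (i mod n) * cnj (gB k t (j mod n)))))"
        unfolding sum_product by (simp add: sum_distrib_left)
      also have "\<dots> = (\<Sum>s<NA k. \<Sum>t<NB k. G (k,s,t) i * cnj (G (k,s,t) j))"
      proof (rule sum.cong[OF refl], rule sum.cong[OF refl])
        fix s t
        have "G (k,s,t) i * cnj (G (k,s,t) j) = (complex_of_real (sqrt (p k)) * complex_of_real (sqrt (p k))) *
           ((gA k s (i div n) * cnj (gA k s (j div n))) * (gB k t (i mod n) * cnj (gB k t (j mod n))))"
          unfolding G_def pv_def by (simp add: ac_simps)
        then show "complex_of_real (p k) * ((gA k s (i div n) * cnj (gA k s (j div n))) * (gB k t (i mod n) * cnj (gB k t (j mod n))))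
          = G (k,s,t) i * cnj (G (k,s,t) j)" unfolding sp by simp
      qed
      finally show "complex_of_real (p k) * kron (A k) (B k) $$ (i,j) = (\<Sum>s<NA k. \<Sum>t<NB k. G (k,s,t) i * cnj (G (k,s,t) j))" .
    qed
    also have "\<dots> = (\<Sum>x\<in>S. G x i * cnj (G x j))"
      unfolding S_def by (rule sum_Sigma3[symmetric]) auto
    finally show ?thesis .
  qed
  have "mtrace (W*\<sigma>) = (\<Sum>x\<in>S. qf (m*n) W (G x))" by (rule trace_rank1[OF fin C Cs e])
  then have "Re (mtrace (W*\<sigma>)) = (\<Sum>x\<in>S. Re (qf (m*n) W (G x)))" by simp
  also have "\<dots> \<ge> 0"
  proof (rule sum_nonneg)
    fix x assume "x \<in> S"
    obtain k s t where x: "x = (k,s,t)" by (cases x) auto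
    show "0 \<le> Re (qf (m*n) W (G x))" unfolding x G_def using P by simp
  qed
  finally show ?thesis .
qed

lemma BP_iff:
  assumes C: "W \<in> carrier_mat (m*n) (m*n)"
  shows "(\<forall>\<sigma>. separable m n \<sigma> \<longrightarrow> 0 \<le> Re (mtrace (W * \<sigma>))) \<longleftrightarrow> (\<forall>a b. 0 \<le> Re (qf (m*n) W (pv n a b)))"
  using BP_prod[OF C] BP_sep[OF C] by blast




lemma qf_split: "qf (m*n) M f = (\<Sum>i1<m. \<Sum>i2<n. \<Sum>j1<m. \<Sum>j2<n.
    cnj (f (i1*n+i2)) * M$$(i1*n+i2, j1*n+j2) * f (j1*n+j2))"
  unfolding qf_def by (simp only: sum_split)

lemma qf_ptrans_pv:
  "qf (m*n) (ptrans m n M) (pv n a b) = qf (m*n) M (pv n (\<lambda>x. cnj (a x)) b)"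
proof -
  have "qf (m*n) (ptrans m n M) (pv n a b) = (\<Sum>i1<m. \<Sum>i2<n. \<Sum>j1<m. \<Sum>j2<n.
      cnj (a i1 * b i2) * M$$(j1*n+i2, i1*n+j2) * (a j1 * b j2))"
    unfolding qf_split by (rule sum.cong[OF refl])+ (simp add: ptrans_entry2 pv_def)
  also have "\<dots> = (\<Sum>i1<m. \<Sum>i2<n. \<Sum>j1<m. \<Sum>j2<n.
      cnj (cnj (a j1) * b i2) * M$$(j1*n+i2, i1*n+j2) * (cnj (a i1) * b j2))"
    by (rule sum.cong[OF refl])+ (simp add: ac_simps)
  also have "\<dots> = (\<Sum>i1<m. \<Sum>i2<n. \<Sum>j1<m. \<Sum>j2<n.
      cnj (cnj (a i1) * b i2) * M$$(i1*n+i2, j1*n+j2) * (cnj (a j1) * b j2))"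
    by (rule sum4_swap[symmetric])
  also have "\<dots> = qf (m*n) M (pv n (\<lambda>x. cnj (a x)) b)"
    unfolding qf_split by (rule sum.cong[OF refl])+ (simp add: pv_def)
  finally show ?thesis .
qed

lemma part3:
  assumes E: "EW m n W" and U: "U \<in> carrier_mat p m" and V: "V \<in> carrier_mat q n"
    and nd: "\<not> decomposable p q (lproj U V W)"
  shows "\<not> decomposable m n W"
proof
  assume "decomposable m n W"
  then obtain X Y where X: "psd (m*n) X" and Y: "psd (m*n) Y" and W: "W = ptrans m n X + Y"
    unfolding decomposable_def by blast
  have Xc: "X \<in> carrier_mat (m*n) (m*n)" and Yc: "Y \<in> carrier_mat (m*n) (m*n)"
    using X Y unfolding psd_iff by auto
  have U': "map_mat cnj U \<in> carrier_mat p m" using U by simp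
  have "lproj U V W = lproj U V (ptrans m n X) + lproj U V Y"
    unfolding W by (rule lproj_add[OF U V ptrans_carrier Yc])
  also have "\<dots> = ptrans p q (lproj (map_mat cnj U) V X) + lproj U V Y"
    by (simp add: lproj_ptrans[OF U V Xc])
  finally have eq: "lproj U V W = ptrans p q (lproj (map_mat cnj U) V X) + lproj U V Y" .
  have "psd (p*q) (lproj (map_mat cnj U) V X)"
    unfolding lproj_def by (rule psd_congr[OF kron_carrier[OF U' V] X])
  moreover have "psd (p*q) (lproj U V Y)"
    unfolding lproj_def by (rule psd_congr[OF kron_carrier[OF U V] Y])
  ultimately have "decomposable p q (lproj U V W)"
    unfolding decomposable_def eq by blast
  then show False using nd by blast
qed

lemma part2:
  assumes st: "state (m*n) \<rho>" and und: "one_undistillable m n \<rho>" and npt: "\<not> PPT m n \<rho>"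
  shows "EW m n (ptrans m n \<rho>) \<and>
       \<not> (\<exists>U \<in> carrier_mat 2 m. \<exists>V \<in> carrier_mat n n. EW 2 n (lproj U V (ptrans m n \<rho>)))"
proof
  have P: "psd (m*n) \<rho>" using st unfolding state_def by blast
  then have Cr: "\<rho> \<in> carrier_mat (m*n) (m*n)" unfolding psd_iff by blast
  define R where "R = ptrans m n \<rho>"
  have RC: "R \<in> carrier_mat (m*n) (m*n)" unfolding R_def by (rule ptrans_carrier)
  have h: "hermitian R" unfolding herm_iff[OF RC]
  proof (intro allI impI)
    fix i j assume ij: "i < m*n" "j < m*n"
    have i1: "(j div n)*n + i mod n < m*n" "(i div n)*n + j mod n < m*n"
      using idx_less idx_div idx_mod ij by auto
    have "R$$(i,j) = \<rho>$$((j div n)*n + i mod n, (i div n)*n + j mod n)"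
      unfolding R_def ptrans_def using ij by simp
    also have "\<dots> = cnj (\<rho>$$((i div n)*n + j mod n, (j div n)*n + i mod n))"
      by (rule psd_herm[OF P i1])
    also have "\<dots> = cnj (R$$(j,i))"
      unfolding R_def ptrans_def using ij by simp
    finally show "R$$(i,j) = cnj (R$$(j,i))" .
  qed
  have BP: "\<forall>\<sigma>. separable m n \<sigma> \<longrightarrow> 0 \<le> Re (mtrace (R * \<sigma>))"
    unfolding BP_iff[OF RC]
  proof (intro allI)
    fix a b
    show "0 \<le> Re (qf (m*n) R (pv n a b))"
      unfolding R_def qf_ptrans_pv using P unfolding psd_iff by blast
  qed
  have "\<exists>f. Re (qf (m*n) R f) < 0"
  proof (rule ccontr)
    assume "\<not> (\<exists>f. Re (qf (m*n) R f) < 0)"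
    then have "\<forall>f. 0 \<le> Re (qf (m*n) R f)" by (simp add: not_less)
    then have "psd (m*n) R" by (rule psd_of_qf[OF RC h])
    then show False using npt unfolding PPT_def R_def by blast
  qed
  then obtain f where f: "Re (qf (m*n) R f) < 0" by blast
  show "EW m n (ptrans m n \<rho>)" unfolding R_def[symmetric] by (rule EW_intro[OF RC h BP f])
  show "\<not> (\<exists>U \<in> carrier_mat 2 m. \<exists>V \<in> carrier_mat n n. EW 2 n (lproj U V (ptrans m n \<rho>)))"
  proof
    assume "\<exists>U \<in> carrier_mat 2 m. \<exists>V \<in> carrier_mat n n. EW 2 n (lproj U V (ptrans m n \<rho>))"
    then obtain U V where U: "U \<in> carrier_mat 2 m" and V: "V \<in> carrier_mat n n"
      and E: "EW 2 n (lproj U V (ptrans m n \<rho>))" by blast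
    have U': "map_mat cnj U \<in> carrier_mat 2 m" using U by simp
    have "PPT 2 n (lproj (map_mat cnj U) V \<rho>)" using und U' V unfolding one_undistillable_def by blast
    then have "psd (2*n) (lproj U V (ptrans m n \<rho>))"
      unfolding PPT_def lproj_ptrans[OF U V Cr] .
    then show False using psd_not_EW E by blast
  qed
qed



lemma part1:
  assumes E: "EW 2 n W"
  shows "\<exists>U2 \<in> carrier_mat 2 2. \<exists>V2 \<in> carrier_mat 2 n. EW 2 2 (lproj U2 V2 W)"
proof -
  have C: "W \<in> carrier_mat (2*n) (2*n)" and h: "hermitian W"
    and BP: "\<forall>\<sigma>. separable 2 n \<sigma> \<longrightarrow> 0 \<le> Re (mtrace (W * \<sigma>))"
    using E unfolding EW_def by auto
  obtain f where f: "Re (qf (2*n) W f) < 0" using EW_neg[OF E] by blast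
  define V2 where "V2 = mat 2 n (\<lambda>(c,y). cnj (f (c*n+y)))"
  define K where "K = kron (1\<^sub>m 2) V2"
  have V2c: "V2 \<in> carrier_mat 2 n" unfolding V2_def by simp
  have Ic: "(1\<^sub>m 2 :: complex mat) \<in> carrier_mat 2 2" by simp
  have Kc: "K \<in> carrier_mat (2*2) (2*n)" unfolding K_def by (rule kron_carrier[OF Ic V2c])
  have Kentry: "K $$ (j1*2+j2, l) = (if j1 = l div n then V2 $$ (j2, l mod n) else 0)"
    if j: "j1<2" "j2<2" and l: "l<2*n" for j1 j2 l
  proof -
    have "j1*2+j2 < 2*2" using idx_less[OF j] .
    moreover have "l div n < 2" "l mod n < n" using idx_div[OF l] idx_mod[OF l] by auto
    ultimately show ?thesis unfolding K_def kron_def using j l V2c by auto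
  qed
  have key: "(\<Sum>j<2*2. cnj (K $$ (j,l)) * v j) = (\<Sum>j2<2. cnj (V2 $$ (j2, l mod n)) * v ((l div n)*2 + j2))"
    if l: "l<2*n" for l v
  proof -
    have ld: "l div n < 2" using idx_div[OF l] .
    have "(\<Sum>j<2*2. cnj (K $$ (j,l)) * v j) = (\<Sum>j1<2. \<Sum>j2<2. cnj (K $$ (j1*2+j2,l)) * v (j1*2+j2))"
      by (rule sum_split)
    also have "\<dots> = (\<Sum>j1<2. if j1 = l div n then (\<Sum>j2<2. cnj (V2 $$ (j2, l mod n)) * v (j1*2+j2)) else 0)"
    proof (rule sum.cong[OF refl])
      fix j1 assume j1: "j1 \<in> {..<2::nat}"
      show "(\<Sum>j2<2. cnj (K $$ (j1*2+j2,l)) * v (j1*2+j2)) = (if j1 = l div n then (\<Sum>j2<2. cnj (V2 $$ (j2, l mod n)) * v (j1*2+j2)) else 0)"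
        using j1 l by (cases "j1 = l div n") (simp_all add: Kentry)
    qed
    also have "\<dots> = (\<Sum>j2<2. cnj (V2 $$ (j2, l mod n)) * v ((l div n)*2 + j2))"
      using ld by (simp add: sum.delta')
    finally show ?thesis .
  qed
  define W2 where "W2 = K * W * adj K"
  have W2c: "W2 \<in> carrier_mat (2*2) (2*2)" unfolding W2_def by (rule conj_carrier[OF Kc C])
  have h2: "hermitian W2" unfolding W2_def by (rule herm_congr[OF Kc C h])
  have BP2: "\<forall>\<sigma>. separable 2 2 \<sigma> \<longrightarrow> 0 \<le> Re (mtrace (W2 * \<sigma>))"
    unfolding BP_iff[OF W2c]
  proof (intro allI)
    fix a b
    have "qf (2*2) W2 (pv 2 a b) = qf (2*n) W (\<lambda>l. \<Sum>j<2*2. cnj (K$$(j,l)) * pv 2 a b j)"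
      unfolding W2_def by (rule qf_congr[OF Kc C])
    also have "\<dots> = qf (2*n) W (pv n a (\<lambda>y. \<Sum>j2<2. cnj (V2 $$ (j2, y)) * b j2))"
    proof (rule qf_cong)
      fix l assume l: "l < 2*n"
      have "(\<Sum>j<2*2. cnj (K$$(j,l)) * pv 2 a b j) = (\<Sum>j2<2. cnj (V2 $$ (j2, l mod n)) * pv 2 a b ((l div n)*2 + j2))"
        by (rule key[OF l])
      also have "\<dots> = (\<Sum>j2<2. a (l div n) * (cnj (V2 $$ (j2, l mod n)) * b j2))"
        by (rule sum.cong[OF refl]) (simp add: pv_def ac_simps)
      also have "\<dots> = pv n a (\<lambda>y. \<Sum>j2<2. cnj (V2 $$ (j2, y)) * b j2) l"
        unfolding pv_def by (simp add: sum_distrib_left)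
      finally show "(\<Sum>j<2*2. cnj (K$$(j,l)) * pv 2 a b j) = pv n a (\<lambda>y. \<Sum>j2<2. cnj (V2 $$ (j2, y)) * b j2) l" .
    qed
    finally have eq: "qf (2*2) W2 (pv 2 a b) = qf (2*n) W (pv n a (\<lambda>y. \<Sum>j2<2. cnj (V2 $$ (j2, y)) * b j2))" .
    show "0 \<le> Re (qf (2*2) W2 (pv 2 a b))" unfolding eq by (rule BP_prod[OF C BP])
  qed
  define f4 where "f4 = (\<lambda>j::nat. if j = 0 \<or> j = 3 then (1::complex) else 0)"
  have "qf (2*2) W2 f4 = qf (2*n) W (\<lambda>l. \<Sum>j<2*2. cnj (K$$(j,l)) * f4 j)"
    unfolding W2_def by (rule qf_congr[OF Kc C])
  also have "\<dots> = qf (2*n) W f"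
  proof (rule qf_cong)
    fix l assume l: "l < 2*n"
    have ld: "l div n < 2" and lm: "l mod n < n" using idx_div[OF l] idx_mod[OF l] by auto
    have l2: "{..<2::nat} = {0,1}" by auto
    have V2e: "V2 $$ (c, l mod n) = cnj (f (c*n + l mod n))" if "c < 2" for c
      unfolding V2_def using that lm by simp
    have "(\<Sum>j<2*2. cnj (K$$(j,l)) * f4 j) = (\<Sum>j2<2. cnj (V2 $$ (j2, l mod n)) * f4 ((l div n)*2 + j2))"
      by (rule key[OF l])
    also have "\<dots> = cnj (V2 $$ (l div n, l mod n))"
    proof (cases "l div n = 0")
      case True
      then show ?thesis unfolding l2 by (simp add: f4_def)
    next
      case False
      then have "l div n = 1" using ld by simp
      then show ?thesis unfolding l2 by (simp add: f4_def)
    qed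
    also have "\<dots> = f ((l div n)*n + l mod n)" using V2e[OF ld] by simp
    also have "\<dots> = f l" by simp
    finally show "(\<Sum>j<2*2. cnj (K$$(j,l)) * f4 j) = f l" .
  qed
  finally have "Re (qf (2*2) W2 f4) < 0" using f by simp
  then have "EW 2 2 W2" by (rule EW_intro[OF W2c h2 BP2])
  then have "EW 2 2 (lproj (1\<^sub>m 2) V2 W)" unfolding lproj_def W2_def K_def .
  then show ?thesis using Ic V2c by blast
qed


theorem lemma9:
  shows
   "(\<forall>(m::nat) (n::nat) W U V.
       EW m n W \<and> U \<in> carrier_mat 2 m \<and> V \<in> carrier_mat n n \<and> EW 2 n (lproj U V W) \<longrightarrow>
       (\<exists>U2 \<in> carrier_mat 2 2. \<exists>V2 \<in> carrier_mat 2 n. EW 2 2 (lproj U2 V2 (lproj U V W))))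
    \<and>
    (\<forall>(m::nat) (n::nat) \<rho>.
       state (m*n) \<rho> \<and> one_undistillable m n \<rho> \<and> \<not> PPT m n \<rho> \<longrightarrow>
       EW m n (ptrans m n \<rho>) \<and>
       \<not> (\<exists>U \<in> carrier_mat 2 m. \<exists>V \<in> carrier_mat n n. EW 2 n (lproj U V (ptrans m n \<rho>))))
    \<and>
    (\<forall>(m::nat) (n::nat) (p::nat) (q::nat) W U V.
       EW m n W \<and> U \<in> carrier_mat p m \<and> V \<in> carrier_mat q n \<and>
       EW p q (lproj U V W) \<and> \<not> decomposable p q (lproj U V W) \<and>
       (\<exists>\<rho>. entangled p q \<rho> \<and> PPT p q \<rho> \<and> detects (lproj U V W) \<rho>) \<longrightarrow>
       \<not> decomposable m n W)"
  proof -
  have i: "(\<forall>(m::nat) (n::nat) W U V.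
       EW m n W \<and> U \<in> carrier_mat 2 m \<and> V \<in> carrier_mat n n \<and> EW 2 n (lproj U V W) \<longrightarrow>
       (\<exists>U2 \<in> carrier_mat 2 2. \<exists>V2 \<in> carrier_mat 2 n. EW 2 2 (lproj U2 V2 (lproj U V W))))" using part1 by blast
  have ii: "(\<forall>(m::nat) (n::nat) \<rho>.
       state (m*n) \<rho> \<and> one_undistillable m n \<rho> \<and> \<not> PPT m n \<rho> \<longrightarrow>
       EW m n (ptrans m n \<rho>) \<and>
       \<not> (\<exists>U \<in> carrier_mat 2 m. \<exists>V \<in> carrier_mat n n. EW 2 n (lproj U V (ptrans m n \<rho>))))" using part2 by blast
  have iii: "(\<forall>(m::nat) (n::nat) (p::nat) (q::nat) W U V.
       EW m n W \<and> U \<in> carrier_mat p m \<and> V \<in> carrier_mat q n \<and>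
       EW p q (lproj U V W) \<and> \<not> decomposable p q (lproj U V W) \<and>
       (\<exists>\<rho>. entangled p q \<rho> \<and> PPT p q \<rho> \<and> detects (lproj U V W) \<rho>) \<longrightarrow>
       \<not> decomposable m n W)" using part3 by blast
  show ?thesis using i ii iii by blast
qed

end
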